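(* Let $G=(V,E)$ be a connected graph with $n$ vertices, $\tau$ a set of types with $|\tau|=2$, $f:\tau\to\mathbb{Q}_{\ge1}$ a fitness function, $\alpha\in\tau^+(f)$, and $D\in\mathcal D(G,\tau)$. Then $\pi_\alpha(G,\tau,f,D)\ge 1/n$.
   Context: $\tau^+(f)=\{i\in\tau: f(i)=\max_{j\in\tau}f(j)\}$. For $G=(V,E)$, $N(v)$ is the neighbourhood of $v$. $\Omega$ is the set of functions $V\to\tau$; for $S\in\Omega$, $S|_{v\to w}$ equals $S$ except $w$ gets type $S(v)$. The Moran process $M(G,\tau,f,M_0)$: Markov chain on $\Omega$ from $M_0$; given $M_t$, choose $v$ with probability $f(M_t(v))/\sum_uf(M_t(u))$, then $w\in N(v)$ uniformly, set $M_{t+1}=M_t|_{v\to w}$. $\pi_j(G,\tau,f,M_0)$ is the probability that eventually all vertices have type $j$, and $\pi_j(G,\tau,f,D)=\sum_{M_0}\Pr_D(M_0)\pi_j(G,\tau,f,M_0)$. With $k=|\tau|$, $V[k]$ is the set of $k$-tuples of distinct vertices, $\tau[k]$ the set of $k$-tuples of distinct types, $\Omega(\mathbf u,\boldsymbol\gamma)$ the set of states mapping the $i$-th entry of $\mathbf u$ to the $i$-th entry of $\boldsymbol\gamma$ for all $i$. $\mathcal D(G,\tau)$ is the set of distributions $D$ on $\Omega$ for which there are distributions $D_{\mathbf u,\boldsymbol\gamma}$ on $\Omega(\mathbf u,\boldsymbol\gamma)$ with $\Pr_D(S)=\frac{1}{|V[k]\times\tau[k]|}\sum_{(\mathbf u,\boldsymbol\gamma)\in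 V[k]\times\tau[k]}\Pr_{D_{\mathbf u,\boldsymbol\gamma}}(S)$ for all $S$. *)

theory Defs
  imports Complex_Main "HOL-Library.FuncSet" "HOL-Probability.Probability_Mass_Function"
begin

definition undirected_graph :: "'v set \<Rightarrow> ('v \<Rightarrow> 'v \<Rightarrow> bool) \<Rightarrow> bool" where
  "undirected_graph V E \<longleftrightarrow> finite V \<and> V \<noteq> {} \<and>
     (\<forall>u v. E u v \<longrightarrow> u \<in> V \<and> v \<in> V) \<and>
     (\<forall>u v. E u v \<longrightarrow> E v u) \<and> (\<forall>u. \<not> E u u)"

definition connected_graph :: "'v set \<Rightarrow> ('v \<Rightarrow> 'v \<Rightarrow> bool) \<Rightarrow> bool" where
  "connected_graph V E \<longleftrightarrow> undirected_graph V E \<and>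
     (\<forall>u\<in>V. \<forall>v\<in>V. (u, v) \<in> {(x, y). E x y}\<^sup>*)"

definition nbhd :: "'v set \<Rightarrow> ('v \<Rightarrow> 'v \<Rightarrow> bool) \<Rightarrow> 'v \<Rightarrow> 'v set" where
  "nbhd V E v = {w \<in> V. E v w}"

definition states :: "'v set \<Rightarrow> 't set \<Rightarrow> ('v \<Rightarrow> 't) set" where
  "states V \<tau> = V \<rightarrow>\<^sub>E \<tau>"

definition max_types :: "'t set \<Rightarrow> ('t \<Rightarrow> rat) \<Rightarrow> 't set" where
  "max_types \<tau> f = {i \<in> \<tau>. f i = Max (f ` \<tau>)}"

definition total_fitness :: "'v set \<Rightarrow> ('t \<Rightarrow> rat) \<Rightarrow> ('v \<Rightarrow> 't) \<Rightarrow> real" where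
  "total_fitness V f S = (\<Sum>u\<in>V. real_of_rat (f (S u)))"

definition reproduce :: "('v \<Rightarrow> 't) \<Rightarrow> 'v \<Rightarrow> 'v \<Rightarrow> ('v \<Rightarrow> 't)" where
  "reproduce S v w = S(w := S v)"

definition monochromatic :: "'v set \<Rightarrow> 't \<Rightarrow> ('v \<Rightarrow> 't) \<Rightarrow> bool" where
  "monochromatic V j S \<longleftrightarrow> (\<forall>v\<in>V. S v = j)"

text \<open>Probability that the Moran process started at S has all vertices of type j
  at some time in {0..t} (hitting probability within t steps), computed via the
  transition probabilities f(S v)/sum_u f(S u) * 1/|N(v)|.\<close>
fun hit_within :: "'v set \<Rightarrow> ('v \<Rightarrow> 'v \<Rightarrow> bool) \<Rightarrow> ('t \<Rightarrow> rat) \<Rightarrow> 't \<Rightarrow> nat \<Rightarrow> ('v \<Rightarrow> 't) \<Rightarrow> real" where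
  "hit_within V E f j 0 S = (if monochromatic V j S then 1 else 0)"
| "hit_within V E f j (Suc t) S =
     (if monochromatic V j S then 1 else
       (\<Sum>v\<in>V. \<Sum>w\<in>nbhd V E v.
          real_of_rat (f (S v)) / total_fitness V f S * (1 / real (card (nbhd V E v)))
          * hit_within V E f j t (reproduce S v w)))"

definition fixation_prob :: "'v set \<Rightarrow> ('v \<Rightarrow> 'v \<Rightarrow> bool) \<Rightarrow> ('t \<Rightarrow> rat) \<Rightarrow> 't \<Rightarrow> ('v \<Rightarrow> 't) \<Rightarrow> real" where
  "fixation_prob V E f j S = (SUP t. hit_within V E f j t S)"

definition fixation_prob_dist :: "'v set \<Rightarrow> ('v \<Rightarrow> 'v \<Rightarrow> bool) \<Rightarrow> 't set \<Rightarrow> ('t \<Rightarrow> rat) \<Rightarrow> 't \<Rightarrow> ('v \<Rightarrow> 't) pmf \<Rightarrow> real" where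
  "fixation_prob_dist V E \<tau> f j D = (\<Sum>S\<in>states V \<tau>. pmf D S * fixation_prob V E f j S)"

definition distinct_tuples :: "nat \<Rightarrow> 'a set \<Rightarrow> 'a list set" where
  "distinct_tuples k A = {xs. length xs = k \<and> distinct xs \<and> set xs \<subseteq> A}"

definition states_fixing :: "'v set \<Rightarrow> 't set \<Rightarrow> 'v list \<Rightarrow> 't list \<Rightarrow> ('v \<Rightarrow> 't) set" where
  "states_fixing V \<tau> us gs = {S \<in> states V \<tau>. \<forall>i < length us. S (us ! i) = gs ! i}"

definition init_dists :: "'v set \<Rightarrow> 't set \<Rightarrow> ('v \<Rightarrow> 't) pmf set" where
  "init_dists V \<tau> = {D. \<exists>Dd :: 'v list \<times> 't list \<Rightarrow> ('v \<Rightarrow> 't) pmf.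
     (\<forall>p \<in> distinct_tuples (card \<tau>) V \<times> distinct_tuples (card \<tau>) \<tau>.
        set_pmf (Dd p) \<subseteq> states_fixing V \<tau> (fst p) (snd p)) \<and>
     (\<forall>S. pmf D S = 1 / real (card (distinct_tuples (card \<tau>) V \<times> distinct_tuples (card \<tau>) \<tau>))
        * (\<Sum>p \<in> distinct_tuples (card \<tau>) V \<times> distinct_tuples (card \<tau>) \<tau>. pmf (Dd p) S))}"

end

theory Submission
  imports Defs
begin

declare hit_within.simps(2)[simp del]

locale moran =
  fixes V :: "'v set" and E :: "'v \<Rightarrow> 'v \<Rightarrow> bool" and \<tau> :: "'t set"
    and f :: "'t \<Rightarrow> rat" and \<alpha> :: 't and \<beta> :: 't
  assumes conn: "connected_graph V E"
    and V2: "card V \<ge> 2"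
    and tau: "\<tau> = {\<alpha>, \<beta>}"
    and ab: "\<alpha> \<noteq> \<beta>"
    and fa1: "f \<alpha> \<ge> 1" and fb1: "f \<beta> \<ge> 1" and fba: "f \<beta> \<le> f \<alpha>"
begin

definition "d x = real (card (nbhd V E x))"
definition "p S v = real_of_rat (f (S v)) / total_fitness V f S * (1 / d v)"
definition "AS S = {x\<in>V. S x = \<alpha>}"
definition "wt x = 1 / d x"
definition "Phi = (\<Sum>x\<in>V. wt x)"
definition "psi S = (\<Sum>x\<in>AS S. wt x) / Phi"
definition "absorbing S \<longleftrightarrow> monochromatic V \<alpha> S \<or> monochromatic V \<beta> S"
definition "Top g S = (if absorbing S then 0 else
   (\<Sum>v\<in>V. \<Sum>w\<in>nbhd V E v. p S v * g (reproduce S v w)))"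
definition "m0 S = (if absorbing S then (0::real) else 1)"
definition "m t = (Top ^^ t) m0"
abbreviation "a t S \<equiv> hit_within V E f \<alpha> t S"
abbreviation "n \<equiv> card V"
abbreviation "ST \<equiv> states V \<tau>"

lemma finV: "finite V"
  using conn unfolding connected_graph_def undirected_graph_def by auto

lemma E_V: "E u v \<Longrightarrow> u \<in> V \<and> v \<in> V"
  using conn unfolding connected_graph_def undirected_graph_def by auto

lemma E_sym: "E u v \<Longrightarrow> E v u"
  using conn unfolding connected_graph_def undirected_graph_def by auto

lemma nbhd_sub: "nbhd V E v \<subseteq> V"
  unfolding nbhd_def by auto

lemma fin_nbhd: "finite (nbhd V E v)"
  using nbhd_sub finV finite_subset by blast

lemma rt: "u \<in> V \<Longrightarrow> v \<in> V \<Longrightarrow> (u, v) \<in> {(x, y). E x y}\<^sup>*"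
  using conn unfolding connected_graph_def by auto

lemma nbhd_ne: assumes "x \<in> V" shows "nbhd V E x \<noteq> {}"
proof -
  have "\<exists>y\<in>V. y \<noteq> x"
  proof (rule ccontr)
    assume "\<not> ?thesis"
    then have "V \<subseteq> {x}" by auto
    then have "card V \<le> card {x}" by (intro card_mono) auto
    then have "card V \<le> 1" by simp
    then show False using V2 by simp
  qed
  then obtain y where y: "y \<in> V" "y \<noteq> x" by auto
  have "(x, y) \<in> {(x, y). E x y}\<^sup>*" using rt assms y by auto
  then obtain z where "(x, z) \<in> {(x, y). E x y}" using y(2)
    by (metis converse_rtranclE)
  then have "E x z" by auto
  then show ?thesis unfolding nbhd_def using E_V by auto
qed

lemma d_pos: "x \<in> V \<Longrightarrow> d x > 0"
  unfolding d_def using nbhd_ne fin_nbhd by (simp add: card_gt_0_iff)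

lemma d_le: "d x \<le> real n"
  unfolding d_def using nbhd_sub finV card_mono by (simp add: card_mono)

lemma wt_pos: "x \<in> V \<Longrightarrow> wt x > 0"
  unfolding wt_def using d_pos by simp

lemma Vne: "V \<noteq> {}" using V2 by auto

lemma Phi_pos: "Phi > 0"
  unfolding Phi_def using wt_pos finV Vne by (simp add: sum_pos)

lemma S_vals: "S \<in> ST \<Longrightarrow> x \<in> V \<Longrightarrow> S x = \<alpha> \<or> S x = \<beta>"
  unfolding states_def tau by (auto simp: PiE_iff)

lemma fit_ge1: assumes "S \<in> ST" "x \<in> V" shows "real_of_rat (f (S x)) \<ge> 1"
proof -
  have "f (S x) \<ge> 1" using S_vals[OF assms] fa1 fb1 by auto
  then show ?thesis by (metis of_rat_1 of_rat_less_eq)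
qed

lemma fit_le: assumes "S \<in> ST" "x \<in> V" shows "real_of_rat (f (S x)) \<le> real_of_rat (f \<alpha>)"
proof -
  have "f (S x) \<le> f \<alpha>" using S_vals[OF assms] fba by auto
  then show ?thesis by (simp add: of_rat_less_eq)
qed

lemma total_pos: "S \<in> ST \<Longrightarrow> total_fitness V f S > 0"
  unfolding total_fitness_def using fit_ge1 finV Vne
  by (intro sum_pos) (auto intro: less_le_trans[OF zero_less_one])

lemma total_le: "S \<in> ST \<Longrightarrow> total_fitness V f S \<le> real n * real_of_rat (f \<alpha>)"
proof -
  assume S: "S \<in> ST"
  have "total_fitness V f S \<le> (\<Sum>u\<in>V. real_of_rat (f \<alpha>))"
    unfolding total_fitness_def using fit_le[OF S] by (intro sum_mono) auto
  then show ?thesis by simp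
qed

lemma repro_ST: "S \<in> ST \<Longrightarrow> v \<in> V \<Longrightarrow> w \<in> V \<Longrightarrow> reproduce S v w \<in> ST"
  unfolding states_def reproduce_def by (auto simp: PiE_iff extensional_def)

lemma p_nonneg: assumes "S \<in> ST" "v \<in> V" shows "p S v \<ge> 0"
proof -
  have "real_of_rat (f (S v)) \<ge> 0" using fit_ge1[OF assms] by linarith
  then show ?thesis unfolding p_def using total_pos[OF assms(1)] d_pos[OF assms(2)] by simp
qed

lemma p_sum: assumes S: "S \<in> ST" shows "(\<Sum>v\<in>V. \<Sum>w\<in>nbhd V E v. p S v) = 1"
proof -
  have "(\<Sum>v\<in>V. \<Sum>w\<in>nbhd V E v. p S v) = (\<Sum>v\<in>V. real_of_rat (f (S v)) / total_fitness V f S)"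
  proof (rule sum.cong)
    fix v assume v: "v \<in> V"
    have "(\<Sum>w\<in>nbhd V E v. p S v) = d v * p S v" by (simp add: d_def)
    also have "\<dots> = real_of_rat (f (S v)) / total_fitness V f S"
      unfolding p_def using d_pos[OF v] by simp
    finally show "(\<Sum>w\<in>nbhd V E v. p S v) = real_of_rat (f (S v)) / total_fitness V f S" .
  qed simp
  also have "\<dots> = total_fitness V f S / total_fitness V f S"
    by (simp add: sum_divide_distrib[symmetric] total_fitness_def)
  also have "\<dots> = 1" using total_pos[OF S] by simp
  finally show ?thesis .
qed

lemma finAS: "finite (AS S)" unfolding AS_def using finV by auto

lemma AS_sub: "AS S \<subseteq> V" unfolding AS_def by auto

definition "delta S v w = (if S v = \<alpha> \<and> S w \<noteq> \<alpha> then wt w else if S v \<noteq> \<alpha> \<and> S w = \<alpha> then - wt w else 0) / Phi"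

lemma psi_diff: assumes "w \<in> V"
  shows "psi (reproduce S v w) = psi S + delta S v w"
proof -
  let ?S' = "reproduce S v w"
  have "(\<Sum>x\<in>AS ?S'. wt x) = (\<Sum>x\<in>AS S. wt x) +
     (if S v = \<alpha> \<and> S w \<noteq> \<alpha> then wt w else if S v \<noteq> \<alpha> \<and> S w = \<alpha> then - wt w else 0)"
  proof (cases "S v = \<alpha>")
    case True
    then have "AS ?S' = insert w (AS S)" using assms unfolding AS_def reproduce_def by auto
    show ?thesis
    proof (cases "S w = \<alpha>")
      case True
      then have "w \<in> AS S" using assms unfolding AS_def by auto
      then show ?thesis using True \<open>S v = \<alpha>\<close> \<open>AS ?S' = insert w (AS S)\<close> by (simp add: insert_absorb)
    next
      case False
      then have "w \<notin> AS S" unfolding AS_def by auto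
      then show ?thesis using False \<open>S v = \<alpha>\<close> \<open>AS ?S' = insert w (AS S)\<close> finAS by simp
    qed
  next
    case False
    then have "AS ?S' = AS S - {w}" using assms unfolding AS_def reproduce_def by auto
    then show ?thesis using False finAS assms by (cases "S w = \<alpha>") (auto simp: AS_def sum_diff1)
  qed
  then show ?thesis unfolding psi_def delta_def by (simp add: add_divide_distrib)
qed

lemma pair_sum_nonneg:
  fixes H :: "'a \<Rightarrow> 'a \<Rightarrow> real"
  assumes "finite A" "\<And>v w. v \<in> A \<Longrightarrow> w \<in> A \<Longrightarrow> H v w + H w v \<ge> 0"
  shows "(\<Sum>v\<in>A. \<Sum>w\<in>A. H v w) \<ge> 0"
proof -
  have sw: "(\<Sum>v\<in>A. \<Sum>w\<in>A. H v w) = (\<Sum>v\<in>A. \<Sum>w\<in>A. H w v)" by (rule sum.swap)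
  have "2 * (\<Sum>v\<in>A. \<Sum>w\<in>A. H v w) = (\<Sum>v\<in>A. \<Sum>w\<in>A. H v w + H w v)"
    by (subst sum.distrib, subst sum.distrib, subst sw[symmetric]) simp
  also have "\<dots> \<ge> 0" using assms(2) by (intro sum_nonneg) auto
  finally show ?thesis by simp
qed

lemma p_wt: assumes S: "S \<in> ST" and v: "v \<in> V" and w: "w \<in> V" and "S v = \<alpha>"
  shows "p S w * wt v \<le> p S v * wt w"
proof -
  let ?F = "total_fitness V f S"
  have "p S v * wt w = real_of_rat (f (S v)) * (1 / (?F * d v * d w))"
    unfolding p_def wt_def by simp
  moreover have "p S w * wt v = real_of_rat (f (S w)) * (1 / (?F * d v * d w))"
    unfolding p_def wt_def by simp
  moreover have "1 / (?F * d v * d w) \<ge> 0" using total_pos[OF S] d_pos[OF v] d_pos[OF w] by simp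
  moreover have "real_of_rat (f (S w)) \<le> real_of_rat (f (S v))" using fit_le[OF S w] assms(4) by simp
  ultimately show ?thesis by (simp add: divide_right_mono)
qed

lemma submart: assumes S: "S \<in> ST"
  shows "psi S \<le> (\<Sum>v\<in>V. \<Sum>w\<in>nbhd V E v. p S v * psi (reproduce S v w))"
proof -
  define H where "H v w = (if E v w then p S v * delta S v w else 0)" for v w
  have R: "(\<Sum>v\<in>V. \<Sum>w\<in>nbhd V E v. p S v * delta S v w) = (\<Sum>v\<in>V. \<Sum>w\<in>V. H v w)"
    unfolding nbhd_def H_def by (intro sum.cong refl sum.inter_filter finV)
  have Hp: "H v w + H w v \<ge> 0" if v: "v \<in> V" and w: "w \<in> V" for v w
  proof (cases "E v w")
    case False
    then have "\<not> E w v" using E_sym by blast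
    then show ?thesis using False unfolding H_def by simp
  next
    case True
    then have Ewv: "E w v" using E_sym by blast
    have "S v = \<alpha> \<and> S w \<noteq> \<alpha> \<or> S v \<noteq> \<alpha> \<and> S w = \<alpha> \<or> S v = S w"
      using S_vals[OF S v] S_vals[OF S w] by auto
    moreover
    { assume c: "S v = \<alpha> \<and> S w \<noteq> \<alpha>"
      then have "H v w + H w v = (p S v * wt w - p S w * wt v) / Phi"
        unfolding H_def delta_def using True Ewv by (simp add: diff_divide_distrib)
      moreover have "p S w * wt v \<le> p S v * wt w" using p_wt[OF S v w] c by simp
      ultimately have ?thesis using Phi_pos by simp }
    moreover
    { assume c: "S v \<noteq> \<alpha> \<and> S w = \<alpha>"
      then have "H v w + H w v = (p S w * wt v - p S v * wt w) / Phi"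
        unfolding H_def delta_def using True Ewv by (simp add: diff_divide_distrib)
      moreover have "p S v * wt w \<le> p S w * wt v" using p_wt[OF S w v] c by simp
      ultimately have ?thesis using Phi_pos by simp }
    moreover
    { assume c: "S v = S w"
      then have ?thesis unfolding H_def delta_def by simp }
    ultimately show ?thesis by blast
  qed
  have R0: "(\<Sum>v\<in>V. \<Sum>w\<in>nbhd V E v. p S v * delta S v w) \<ge> 0"
    unfolding R by (rule pair_sum_nonneg[OF finV Hp])
  have "(\<Sum>v\<in>V. \<Sum>w\<in>nbhd V E v. p S v * psi (reproduce S v w))
      = (\<Sum>v\<in>V. \<Sum>w\<in>nbhd V E v. p S v * delta S v w + p S v * psi S)"
    by (intro sum.cong refl) (auto simp: nbhd_def psi_diff algebra_simps)
  also have "\<dots> = (\<Sum>v\<in>V. \<Sum>w\<in>nbhd V E v. p S v * delta S v w) + psi S * (\<Sum>v\<in>V. \<Sum>w\<in>nbhd V E v. p S v)"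
    by (simp add: sum.distrib sum_distrib_left mult_ac)
  also have "\<dots> = (\<Sum>v\<in>V. \<Sum>w\<in>nbhd V E v. p S v * delta S v w) + psi S"
    using p_sum[OF S] by simp
  finally show ?thesis using R0 by simp
qed

definition "PS g S = (\<Sum>v\<in>V. \<Sum>w\<in>nbhd V E v. p S v * g (reproduce S v w))"

lemma Top_PS: "Top g S = (if absorbing S then 0 else PS g S)"
  unfolding Top_def PS_def by simp

lemma a_Suc: "a (Suc t) S = (if monochromatic V \<alpha> S then 1 else PS (a t) S)"
  by (simp only: hit_within.simps(2) PS_def p_def d_def)

lemma m_Suc: "m (Suc t) S = Top (m t) S"
  unfolding m_def by simp

lemma m_0: "m 0 S = m0 S" unfolding m_def by simp

lemma in_nbhd: "w \<in> nbhd V E v \<Longrightarrow> w \<in> V" unfolding nbhd_def by auto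

lemma PS_mono: assumes S: "S \<in> ST" and le: "\<And>S'. S' \<in> ST \<Longrightarrow> g S' \<le> h S'"
  shows "PS g S \<le> PS h S"
  unfolding PS_def
  by (intro sum_mono mult_left_mono le repro_ST[OF S] p_nonneg[OF S]) (auto dest: in_nbhd)

lemma PS_nonneg: assumes S: "S \<in> ST" and le: "\<And>S'. S' \<in> ST \<Longrightarrow> 0 \<le> g S'"
  shows "0 \<le> PS g S"
  unfolding PS_def
  by (intro sum_nonneg mult_nonneg_nonneg le repro_ST[OF S] p_nonneg[OF S]) (auto dest: in_nbhd)

lemma PS_add: "PS (\<lambda>S. g S + h S) S = PS g S + PS h S"
  unfolding PS_def by (simp add: sum.distrib algebra_simps)

lemma PS_scale: "PS (\<lambda>S. c * g S) S = c * PS g S"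
  unfolding PS_def by (simp add: sum_distrib_left algebra_simps)

lemma PS_const: assumes "S \<in> ST" shows "PS (\<lambda>S. c) S = c"
proof -
  have "PS (\<lambda>S. c) S = (\<Sum>v\<in>V. \<Sum>w\<in>nbhd V E v. c * p S v)"
    unfolding PS_def by (simp only: mult.commute)
  also have "\<dots> = c * (\<Sum>v\<in>V. \<Sum>w\<in>nbhd V E v. p S v)"
    by (simp only: sum_distrib_left)
  finally show ?thesis using p_sum[OF assms] by simp
qed

lemma psi_nonneg: "psi S \<ge> 0"
proof -
  have "\<forall>x\<in>AS S. wt x \<ge> 0" using AS_sub wt_pos by (meson less_imp_le subsetD)
  then show ?thesis unfolding psi_def using Phi_pos by (intro divide_nonneg_pos sum_nonneg) auto
qed

lemma psi_le1: "psi S \<le> 1"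
proof -
  have "(\<Sum>x\<in>AS S. wt x) \<le> Phi" unfolding Phi_def
    using finV AS_sub wt_pos by (intro sum_mono2) (auto simp: less_imp_le)
  then show ?thesis unfolding psi_def using Phi_pos by simp
qed

lemma psi_beta: "monochromatic V \<beta> S \<Longrightarrow> psi S = 0"
proof -
  assume "monochromatic V \<beta> S"
  then have "AS S = {}" unfolding AS_def monochromatic_def using ab by auto
  then show ?thesis unfolding psi_def by simp
qed

lemma mono_abs: "monochromatic V \<alpha> S \<Longrightarrow> absorbing S"
  unfolding absorbing_def by simp

lemma am_bounds: "S \<in> ST \<Longrightarrow> 0 \<le> a t S \<and> 0 \<le> m t S \<and> a t S + m t S \<le> 1"
proof (induction t arbitrary: S)
  case 0
  then show ?case unfolding m_0 m0_def absorbing_def by auto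
next
  case (Suc t)
  show ?case
  proof (cases "monochromatic V \<alpha> S")
    case True
    then show ?thesis unfolding m_Suc Top_PS using mono_abs by (simp add: a_Suc)
  next
    case False
    have a1: "a (Suc t) S = PS (a t) S" using False a_Suc by simp
    have a0: "0 \<le> PS (a t) S" using Suc by (intro PS_nonneg) auto
    have mb0: "0 \<le> PS (m t) S" using Suc by (intro PS_nonneg) auto
    have m1: "0 \<le> m (Suc t) S \<and> m (Suc t) S \<le> PS (m t) S"
      unfolding m_Suc Top_PS using mb0 by auto
    have "PS (a t) S + PS (m t) S = PS (\<lambda>S. a t S + m t S) S" by (simp add: PS_add)
    also have "\<dots> \<le> PS (\<lambda>S. 1) S" using Suc by (intro PS_mono) auto
    also have "\<dots> = 1" using PS_const Suc by simp
    finally show ?thesis using a1 a0 m1 by simp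
  qed
qed

lemma psi_le: "S \<in> ST \<Longrightarrow> psi S \<le> a t S + m t S"
proof (induction t arbitrary: S)
  case 0
  have b: "0 \<le> a 0 S" "0 \<le> m 0 S" using am_bounds[OF 0] by auto
  show ?case
  proof (cases "monochromatic V \<alpha> S")
    case True
    then show ?thesis using psi_le1[of S] b by simp
  next
    case False
    show ?thesis
    proof (cases "monochromatic V \<beta> S")
      case True
      then show ?thesis using psi_beta b by simp
    next
      case False
      then have "m 0 S = 1" using \<open>\<not> monochromatic V \<alpha> S\<close> unfolding m_0 m0_def absorbing_def by simp
      then show ?thesis using psi_le1[of S] b by simp
    qed
  qed
next
  case (Suc t)
  have b: "0 \<le> a (Suc t) S" "0 \<le> m (Suc t) S" using am_bounds[OF Suc.prems] by auto
  show ?case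
  proof (cases "monochromatic V \<alpha> S")
    case True
    then show ?thesis using psi_le1[of S] b by (simp add: a_Suc)
  next
    case False
    show ?thesis
    proof (cases "monochromatic V \<beta> S")
      case True
      then show ?thesis using psi_beta b by simp
    next
      case False
      then have na: "\<not> absorbing S" using \<open>\<not> monochromatic V \<alpha> S\<close> unfolding absorbing_def by simp
      have "psi S \<le> PS psi S" using submart[OF Suc.prems] unfolding PS_def .
      also have "\<dots> \<le> PS (\<lambda>S. a t S + m t S) S" using Suc by (intro PS_mono) auto
      also have "\<dots> = a (Suc t) S + m (Suc t) S"
        using na \<open>\<not> monochromatic V \<alpha> S\<close> by (simp add: PS_add a_Suc m_Suc Top_PS)
      finally show ?thesis .
    qed
  qed
qed

lemma cut: assumes "A \<subseteq> V" "x \<in> A" "y \<in> V" "y \<notin> A"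
  shows "\<exists>v\<in>A. \<exists>w. w \<in> V \<and> w \<notin> A \<and> E v w"
proof -
  have "(x, y) \<in> {(x, y). E x y}\<^sup>*" using rt assms by auto
  then have "y \<notin> A \<longrightarrow> (\<exists>v\<in>A. \<exists>w. w \<in> V \<and> w \<notin> A \<and> E v w)"
  proof (induction rule: rtrancl_induct)
    case base
    then show ?case using assms by auto
  next
    case (step y z)
    then show ?case using E_V by blast
  qed
  then show ?thesis using assms by auto
qed

abbreviation "cc \<equiv> 1 / (real n * real n)"

lemma n_pos: "real n \<ge> 2" using V2 by simp

lemma cc_pos: "0 < cc" using n_pos by simp

lemma cc_le1: "cc \<le> 1"
proof -
  have "1 \<le> real n * real n" using n_pos
    by (metis mult_mono' dual_order.trans numeral_le_one_iff one_le_numeral semiring_norm(69) mult_1 zero_le_one)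
  then show ?thesis by simp
qed

lemma p_ge: assumes S: "S \<in> ST" and v: "v \<in> V" and Sv: "S v = \<alpha>"
  shows "p S v \<ge> cc"
proof -
  let ?F = "total_fitness V f S" and ?r = "real_of_rat (f \<alpha>)"
  have F: "?F > 0" "?F \<le> real n * ?r" using total_pos[OF S] total_le[OF S] by auto
  have r: "?r \<ge> 1" using fit_ge1[OF S v] Sv by simp
  have "1 / real n \<le> ?r / ?F" using F r n_pos by (simp add: field_simps)
  moreover have "1 / real n \<le> 1 / d v" using d_le[of v] d_pos[OF v] by (simp add: frac_le)
  moreover have "0 \<le> ?r / ?F" using F r by simp
  ultimately have "1 / real n * (1 / real n) \<le> ?r / ?F * (1 / d v)"
    using n_pos by (intro mult_mono) auto
  then show ?thesis unfolding p_def using Sv by simp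
qed

lemma progress: "\<forall>S\<in>ST. card (V - AS S) \<le> k \<longrightarrow> AS S \<noteq> {} \<longrightarrow> a k S \<ge> cc ^ k"
proof (induction k)
  case 0
  show ?case
  proof (intro ballI impI)
    fix S assume S: "S \<in> ST" "card (V - AS S) \<le> 0"
    then have "V - AS S = {}" using finV by simp
    then have "monochromatic V \<alpha> S" unfolding monochromatic_def AS_def by auto
    then show "a 0 S \<ge> cc ^ 0" by simp
  qed
next
  case (Suc k)
  show ?case
  proof (intro ballI impI)
    fix S assume S: "S \<in> ST" and cS: "card (V - AS S) \<le> Suc k" and ne: "AS S \<noteq> {}"
    show "a (Suc k) S \<ge> cc ^ Suc k"
    proof (cases "monochromatic V \<alpha> S")
      case True
      have "a (Suc k) S = 1" using True by (simp add: a_Suc)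
      moreover have "cc ^ Suc k \<le> 1" using cc_pos cc_le1 by (intro power_le_one) auto
      ultimately show ?thesis by linarith
    next
      case False
      then obtain y where y: "y \<in> V" "y \<notin> AS S" unfolding monochromatic_def AS_def by auto
      obtain x where x: "x \<in> AS S" using ne by auto
      obtain v w where v: "v \<in> AS S" and w: "w \<in> V" "w \<notin> AS S" and Evw: "E v w"
        using cut[OF AS_sub x y] by auto
      have vV: "v \<in> V" and Sv: "S v = \<alpha>" using v unfolding AS_def by auto
      let ?S' = "reproduce S v w"
      have S': "?S' \<in> ST" using repro_ST[OF S vV w(1)] .
      have AS': "AS ?S' = insert w (AS S)" using Sv w(1) unfolding AS_def reproduce_def by auto
      have "V - AS ?S' = (V - AS S) - {w}" using AS' by auto
      then have "card (V - AS ?S') = card (V - AS S) - 1" using w finV by (simp add: card_Diff_singleton)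
      then have c': "card (V - AS ?S') \<le> k" using cS by simp
      have IH: "a k ?S' \<ge> cc ^ k" using Suc.IH S' c' AS' by auto
      have nn: "0 \<le> p S v' * a k (reproduce S v' w')" if "v' \<in> V" "w' \<in> nbhd V E v'" for v' w'
        using p_nonneg[OF S that(1)] am_bounds[OF repro_ST[OF S that(1) in_nbhd[OF that(2)]]] by simp
      have wn: "w \<in> nbhd V E v" unfolding nbhd_def using w Evw by simp
      have "p S v * a k ?S' \<le> (\<Sum>w'\<in>nbhd V E v. p S v * a k (reproduce S v w'))"
        using nn vV wn fin_nbhd by (intro member_le_sum) auto
      also have "\<dots> \<le> PS (a k) S" unfolding PS_def
        using nn vV finV fin_nbhd by (intro member_le_sum sum_nonneg) auto
      finally have "p S v * a k ?S' \<le> a (Suc k) S" using False by (simp add: a_Suc)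
      moreover have "cc * cc ^ k \<le> p S v * a k ?S'"
        using p_ge[OF S vV Sv] IH cc_pos p_nonneg[OF S vV] by (intro mult_mono) auto
      ultimately show ?thesis by simp
    qed
  qed
qed

abbreviation "dd \<equiv> cc ^ n"

lemma dd_pos: "0 < dd" using cc_pos by simp
lemma dd_le1: "dd \<le> 1" using cc_pos cc_le1 by (simp add: power_le_one)

lemma a_n: assumes S: "S \<in> ST" and ne: "AS S \<noteq> {}" shows "a n S \<ge> dd"
proof -
  have "card (V - AS S) \<le> n" using finV by (simp add: card_mono)
  then show ?thesis using progress[of n] S ne by auto
qed

lemma Top_mono: assumes S: "S \<in> ST" and le: "\<And>S'. S' \<in> ST \<Longrightarrow> g S' \<le> h S'"
  shows "Top g S \<le> Top h S"
  unfolding Top_PS using PS_mono[OF S le] by simp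

lemma Top_scale: "Top (\<lambda>S. c * g S) S = c * Top g S"
  unfolding Top_PS using PS_scale by simp

lemma funpow_scale: assumes "\<And>S. S \<in> ST \<Longrightarrow> g S \<le> c * h S"
  shows "S \<in> ST \<Longrightarrow> (Top ^^ k) g S \<le> c * (Top ^^ k) h S"
proof (induction k arbitrary: S)
  case 0
  then show ?case using assms by simp
next
  case (Suc k)
  have "(Top ^^ Suc k) g S = Top ((Top ^^ k) g) S" by simp
  also have "\<dots> \<le> Top (\<lambda>S. c * (Top ^^ k) h S) S" using Suc by (intro Top_mono) auto
  also have "\<dots> = c * (Top ^^ Suc k) h S" by (simp add: Top_scale)
  finally show ?case .
qed

lemma m_n: assumes S: "S \<in> ST" shows "m n S \<le> (1 - dd) * m0 S"
proof (cases "absorbing S")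
  case True
  have "n = Suc (n - 1)" using V2 by simp
  then have "m n S = Top (m (n - 1)) S" using m_Suc by metis
  then show ?thesis using True unfolding Top_PS m0_def by simp
next
  case False
  then have "\<not> monochromatic V \<beta> S" unfolding absorbing_def by simp
  then have "AS S \<noteq> {}" using S_vals[OF S] unfolding monochromatic_def AS_def by blast
  then have "a n S \<ge> dd" using a_n S by simp
  moreover have "a n S + m n S \<le> 1" using am_bounds[OF S] by simp
  ultimately show ?thesis using False unfolding m0_def by simp
qed

lemma decay: "S \<in> ST \<Longrightarrow> m (j * n) S \<le> (1 - dd) ^ j * m0 S"
proof (induction j arbitrary: S)
  case 0
  then show ?case by (simp add: m_0)
next
  case (Suc j)
  have "m (Suc j * n) S = (Top ^^ n) (m (j * n)) S"
    unfolding m_def by (simp add: funpow_add)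
  also have "\<dots> \<le> (1 - dd) ^ j * (Top ^^ n) m0 S"
    using Suc.IH by (intro funpow_scale Suc.prems)
  also have "\<dots> = (1 - dd) ^ j * m n S" unfolding m_def by simp
  also have "\<dots> \<le> (1 - dd) ^ j * ((1 - dd) * m0 S)"
    using m_n[OF Suc.prems] dd_le1 by (intro mult_left_mono) auto
  finally show ?case by (simp add: mult_ac)
qed

lemma fix_ge: assumes S: "S \<in> ST" shows "psi S \<le> fixation_prob V E f \<alpha> S"
proof -
  have a1: "a t S \<le> 1" for t using am_bounds[OF S, of t] by linarith
  have bdd: "bdd_above (range (\<lambda>t. a t S))" using a1 by (intro bdd_aboveI[of _ 1]) auto
  have le: "psi S - (1 - dd) ^ j \<le> fixation_prob V E f \<alpha> S" for j
  proof -
    have "psi S \<le> a (j * n) S + m (j * n) S" using psi_le[OF S] .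
    moreover have "m (j * n) S \<le> (1 - dd) ^ j" using decay[OF S, of j] dd_le1
      by (smt (verit) m0_def mult_left_le zero_le_power)
    moreover have "a (j * n) S \<le> fixation_prob V E f \<alpha> S"
      unfolding fixation_prob_def by (rule cSUP_upper[OF UNIV_I bdd])
    ultimately show ?thesis by simp
  qed
  have "(\<lambda>j. psi S - (1 - dd) ^ j) \<longlonglongrightarrow> psi S - 0"
    using dd_pos dd_le1 by (intro tendsto_intros) simp
  then show ?thesis using le by (intro LIMSEQ_le_const2) auto
qed

lemma fix_nonneg: assumes S: "S \<in> ST" shows "0 \<le> fixation_prob V E f \<alpha> S"
  using fix_ge[OF S] psi_nonneg[of S] by simp

lemma finST: "finite ST"
  unfolding states_def tau using finV by (intro finite_PiE) auto

lemma dt_tau: "distinct_tuples 2 \<tau> = {[\<alpha>, \<beta>], [\<beta>, \<alpha>]}"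
proof -
  have "xs \<in> distinct_tuples 2 \<tau> \<longleftrightarrow> xs = [\<alpha>, \<beta>] \<or> xs = [\<beta>, \<alpha>]" for xs
  proof
    assume "xs \<in> distinct_tuples 2 \<tau>"
    then have "length xs = 2" "distinct xs" "set xs \<subseteq> {\<alpha>, \<beta>}" unfolding distinct_tuples_def tau by auto
    then obtain x y where "xs = [x, y]" "x \<noteq> y" "x \<in> {\<alpha>, \<beta>}" "y \<in> {\<alpha>, \<beta>}"
      by (auto simp: numeral_2_eq_2 length_Suc_conv)
    then show "xs = [\<alpha>, \<beta>] \<or> xs = [\<beta>, \<alpha>]" by auto
  next
    assume "xs = [\<alpha>, \<beta>] \<or> xs = [\<beta>, \<alpha>]"
    then show "xs \<in> distinct_tuples 2 \<tau>" unfolding distinct_tuples_def tau using ab by auto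
  qed
  then show ?thesis by auto
qed

lemma dt_V: "distinct_tuples 2 V = (\<lambda>(x, y). [x, y]) ` (SIGMA x:V. V - {x})"
proof -
  have "xs \<in> distinct_tuples 2 V \<longleftrightarrow> xs \<in> (\<lambda>(x, y). [x, y]) ` (SIGMA x:V. V - {x})" for xs
  proof
    assume "xs \<in> distinct_tuples 2 V"
    then have "length xs = 2" "distinct xs" "set xs \<subseteq> V" unfolding distinct_tuples_def by auto
    then obtain x y where "xs = [x, y]" "x \<noteq> y" "x \<in> V" "y \<in> V"
      by (auto simp: numeral_2_eq_2 length_Suc_conv)
    then show "xs \<in> (\<lambda>(x, y). [x, y]) ` (SIGMA x:V. V - {x})" by (auto intro!: image_eqI[of _ _ "(x, y)"])
  next
    assume "xs \<in> (\<lambda>(x, y). [x, y]) ` (SIGMA x:V. V - {x})"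
    then show "xs \<in> distinct_tuples 2 V" unfolding distinct_tuples_def by auto
  qed
  then show ?thesis by auto
qed

lemma inj_pair: "inj_on (\<lambda>(x, y). [x, y]) (SIGMA x:V. V - {x})"
  by (auto simp: inj_on_def)

lemma card_dtV: "card (distinct_tuples 2 V) = n * (n - 1)"
proof -
  have "card (distinct_tuples 2 V) = card (SIGMA x:V. V - {x})"
    unfolding dt_V using inj_pair by (simp add: card_image)
  also have "\<dots> = (\<Sum>x\<in>V. card (V - {x}))" using finV by (simp add: card_SigmaI)
  also have "\<dots> = (\<Sum>x\<in>V. n - 1)" using finV by (intro sum.cong refl) simp
  finally show ?thesis by simp
qed

lemma sum_dtV: "(\<Sum>u\<in>distinct_tuples 2 V. wt (u ! 0) + wt (u ! 1)) = 2 * (real n - 1) * Phi"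
proof -
  have "(\<Sum>u\<in>distinct_tuples 2 V. wt (u ! 0) + wt (u ! 1))
      = (\<Sum>(x, y)\<in>(SIGMA x:V. V - {x}). wt x + wt y)"
    unfolding dt_V by (subst sum.reindex[OF inj_pair]) (simp add: case_prod_beta)
  also have "\<dots> = (\<Sum>x\<in>V. \<Sum>y\<in>V - {x}. wt x + wt y)"
    using finV by (simp add: sum.Sigma)
  also have "\<dots> = (\<Sum>x\<in>V. (real n - 1) * wt x + (Phi - wt x))"
  proof (intro sum.cong refl)
    fix x assume x: "x \<in> V"
    have "(\<Sum>y\<in>V - {x}. wt x + wt y) = real (card (V - {x})) * wt x + (\<Sum>y\<in>V - {x}. wt y)"
      by (simp add: sum.distrib)
    also have "\<dots> = (real n - 1) * wt x + (Phi - wt x)"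
      using x finV V2 unfolding Phi_def by (simp add: sum_diff1 of_nat_diff)
    finally show "(\<Sum>y\<in>V - {x}. wt x + wt y) = (real n - 1) * wt x + (Phi - wt x)" .
  qed
  also have "\<dots> = (real n - 1) * Phi + (real n * Phi - Phi)"
    unfolding Phi_def by (simp add: sum.distrib sum_distrib_left sum_subtractf)
  also have "\<dots> = 2 * (real n - 1) * Phi" by (simp add: algebra_simps)
  finally show ?thesis .
qed

lemma psi_ge_pt: assumes "u \<in> V" "S u = \<alpha>" shows "wt u / Phi \<le> psi S"
proof -
  have "u \<in> AS S" using assms unfolding AS_def by auto
  moreover have "\<forall>x\<in>AS S. wt x \<ge> 0" using AS_sub wt_pos by (meson less_imp_le subsetD)
  ultimately have "wt u \<le> (\<Sum>x\<in>AS S. wt x)" using finAS by (intro member_le_sum) auto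
  then show ?thesis unfolding psi_def using Phi_pos by (simp add: divide_right_mono)
qed

lemma main:
  fixes D :: "('v \<Rightarrow> 't) pmf" and Dd :: "'v list \<times> 't list \<Rightarrow> ('v \<Rightarrow> 't) pmf"
  defines "P \<equiv> distinct_tuples 2 V \<times> distinct_tuples 2 \<tau>"
  assumes supp: "\<And>q. q \<in> P \<Longrightarrow> set_pmf (Dd q) \<subseteq> states_fixing V \<tau> (fst q) (snd q)"
    and pD: "\<And>S. pmf D S = 1 / real (card P) * (\<Sum>q\<in>P. pmf (Dd q) S)"
  shows "fixation_prob_dist V E \<tau> f \<alpha> D \<ge> 1 / real n"
proof -
  define lowb where "lowb q = wt (fst q ! (if snd q ! 0 = \<alpha> then 0 else 1)) / Phi" for q
  have finP: "finite P" unfolding P_def dt_V dt_tau using finV by auto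
  have cardP: "card P = n * (n - 1) * 2" unfolding P_def
    by (simp add: card_cartesian_product card_dtV dt_tau ab)
  have C: "lowb q \<le> (\<Sum>S\<in>ST. pmf (Dd q) S * psi S)" if q: "q \<in> P" for q
  proof -
    obtain u \<gamma> where q': "q = (u, \<gamma>)" by fastforce
    have u: "u \<in> distinct_tuples 2 V" and g: "\<gamma> = [\<alpha>, \<beta>] \<or> \<gamma> = [\<beta>, \<alpha>]"
      using q unfolding q' P_def dt_tau by auto
    define i where "i = (if \<gamma> ! 0 = \<alpha> then 0 else (1::nat))"
    have i: "i < length u" "\<gamma> ! i = \<alpha>" using u g ab unfolding i_def distinct_tuples_def by auto
    have uiV: "u ! i \<in> V" using u i(1) unfolding distinct_tuples_def by auto
    have pt: "pmf (Dd q) S * lowb q \<le> pmf (Dd q) S * psi S" if S: "S \<in> ST" for S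
    proof (cases "S \<in> set_pmf (Dd q)")
      case True
      then have "S \<in> states_fixing V \<tau> u \<gamma>" using supp[OF q] q' by auto
      then have "S (u ! i) = \<alpha>" using i unfolding states_fixing_def by auto
      then have "lowb q \<le> psi S" using psi_ge_pt[OF uiV] unfolding lowb_def q' i_def by simp
      then show ?thesis by (intro mult_left_mono) auto
    next
      case False
      then show ?thesis by (simp add: set_pmf_iff)
    qed
    have "set_pmf (Dd q) \<subseteq> ST" using supp[OF q] unfolding states_fixing_def by auto
    then have "(\<Sum>S\<in>ST. pmf (Dd q) S) = 1" using finST by (intro sum_pmf_eq_1)
    then have "lowb q = (\<Sum>S\<in>ST. pmf (Dd q) S * lowb q)" by (simp add: sum_distrib_right[symmetric])
    also have "\<dots> \<le> (\<Sum>S\<in>ST. pmf (Dd q) S * psi S)" using pt by (intro sum_mono) auto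
    finally show ?thesis .
  qed
  have sumlow: "(\<Sum>q\<in>P. lowb q) = 2 * (real n - 1)"
  proof -
    have "(\<Sum>q\<in>P. lowb q) = (\<Sum>u\<in>distinct_tuples 2 V. \<Sum>g\<in>{[\<alpha>, \<beta>], [\<beta>, \<alpha>]}. lowb (u, g))"
      unfolding P_def dt_tau by (simp add: sum.cartesian_product)
    also have "\<dots> = (\<Sum>u\<in>distinct_tuples 2 V. (wt (u ! 0) + wt (u ! 1)) / Phi)"
      using ab by (intro sum.cong refl) (simp add: lowb_def add_divide_distrib)
    also have "\<dots> = (\<Sum>u\<in>distinct_tuples 2 V. wt (u ! 0) + wt (u ! 1)) / Phi"
      by (simp only: sum_divide_distrib)
    also have "\<dots> = 2 * (real n - 1) * Phi / Phi"
      by (simp only: sum_dtV)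
    finally show ?thesis using Phi_pos by simp
  qed
  have "fixation_prob_dist V E \<tau> f \<alpha> D \<ge> (\<Sum>S\<in>ST. pmf D S * psi S)"
    unfolding fixation_prob_dist_def using fix_ge
    by (intro sum_mono mult_left_mono) auto
  moreover have "(\<Sum>S\<in>ST. pmf D S * psi S) = 1 / real (card P) * (\<Sum>q\<in>P. \<Sum>S\<in>ST. pmf (Dd q) S * psi S)"
    unfolding pD by (simp add: sum_distrib_left sum_distrib_right sum.swap[of _ ST] mult_ac)
  moreover have "(\<Sum>q\<in>P. lowb q) \<le> (\<Sum>q\<in>P. \<Sum>S\<in>ST. pmf (Dd q) S * psi S)"
    using C by (intro sum_mono) auto
  moreover have "1 / real (card P) * (\<Sum>q\<in>P. lowb q) = 1 / real n"
    unfolding sumlow cardP using V2 by (simp add: of_nat_diff field_simps)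
  ultimately show ?thesis
    by (smt (verit) cardP mult_left_mono of_nat_0_le_iff zero_le_divide_1_iff)
qed

end

theorem lemma8:
  fixes V :: "'v set" and E :: "'v \<Rightarrow> 'v \<Rightarrow> bool" and \<tau> :: "'t set"
    and f :: "'t \<Rightarrow> rat" and \<alpha> :: 't and D :: "('v \<Rightarrow> 't) pmf"
  assumes "connected_graph V E"
    and "card \<tau> = 2"
    and "\<forall>i\<in>\<tau>. f i \<ge> 1"
    and "\<alpha> \<in> max_types \<tau> f"
    and "D \<in> init_dists V \<tau>"
  shows "fixation_prob_dist V E \<tau> f \<alpha> D \<ge> 1 / real (card V)"
proof -
  note A = assms
  have finV: "finite V" using A(1) unfolding connected_graph_def undirected_graph_def by auto
  have "\<alpha> \<in> \<tau>" and fmax: "f \<alpha> = Max (f ` \<tau>)" using A(4) unfolding max_types_def by auto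
  obtain x y where xy: "\<tau> = {x, y}" "x \<noteq> y" using A(2) card_2_iff by metis
  obtain \<beta> where tb: "\<tau> = {\<alpha>, \<beta>}" "\<alpha> \<noteq> \<beta>"
    using xy \<open>\<alpha> \<in> \<tau>\<close> by (metis insert_commute insertE singletonD)
  have fin\<tau>: "finite \<tau>" using tb by simp
  have fba: "f \<beta> \<le> f \<alpha>" unfolding fmax using fin\<tau> tb by (intro Max_ge) auto
  have fa1: "f \<alpha> \<ge> 1" and fb1: "f \<beta> \<ge> 1" using A(3) tb by auto
  obtain Dd :: "'v list \<times> 't list \<Rightarrow> ('v \<Rightarrow> 't) pmf" where
    supp: "\<forall>q \<in> distinct_tuples (card \<tau>) V \<times> distinct_tuples (card \<tau>) \<tau>.
        set_pmf (Dd q) \<subseteq> states_fixing V \<tau> (fst q) (snd q)" and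
    pD: "\<forall>S. pmf D S = 1 / real (card (distinct_tuples (card \<tau>) V \<times> distinct_tuples (card \<tau>) \<tau>))
        * (\<Sum>q \<in> distinct_tuples (card \<tau>) V \<times> distinct_tuples (card \<tau>) \<tau>. pmf (Dd q) S)"
    using A(5) unfolding init_dists_def by blast
  have V2: "card V \<ge> 2"
  proof (rule ccontr)
    assume "\<not> card V \<ge> 2"
    then have "distinct_tuples 2 V = {}"
    proof -
      assume c: "\<not> card V \<ge> 2"
      { fix xs assume "xs \<in> distinct_tuples 2 V"
        then have "length xs = 2" "distinct xs" "set xs \<subseteq> V" unfolding distinct_tuples_def by auto
        then have "card (set xs) = 2" by (simp add: distinct_card)
        moreover have "card (set xs) \<le> card V" using \<open>set xs \<subseteq> V\<close> finV by (rule card_mono[rotated])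
        ultimately have False using c by simp }
      then show ?thesis by auto
    qed
    then have "\<And>S. pmf D S = 0" using pD A(2) by simp
    moreover obtain S where "S \<in> set_pmf D" using set_pmf_not_empty by fastforce
    ultimately show False by (simp add: set_pmf_iff)
  qed
  interpret moran V E \<tau> f \<alpha> \<beta>
    by unfold_locales (use A(1) V2 tb fa1 fb1 fba in auto)
  show ?thesis
    using main[of Dd D] supp pD A(2) by auto
qed

end
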